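(* Let $V=(J,(V_j)_{j\in J},d,H)$ be a hypergraph system, and let $(\nu_e)_{e\in H}$ be a pseudorandom system of measures on $V$. Suppose that for every $e'\subseteq J$ with $|e'|<d$ we are given a $\sigma$-algebra $\mathcal{B}_{e'}\subseteq\mathcal{A}_{e'}$ with $|\mathcal{B}_{e'}|\le M$. Let $e\in H$ and let $E'_e$ be a set in $\bigvee_{e'\subsetneq e}\mathcal{B}_{e'}$. Then for every $f:V_e\to\mathbb{R}$, $$\mathbb{E}\big(1_{E'_e}(x)f(\pi_e(x))\mid x\in V_J\big)=O_M\big(\|f\|_{\Box^e}\big).$$
   Context: A hypergraph system is a quadruple $V=(J,(V_j)_{j\in J},d,H)$ where $J$ is a finite set, each $V_j$ is a finite nonempty set, $d\ge1$ is an integer and $H\subseteq\binom{J}{d}:=\{e\subseteq J:|e|=d\}$. For $e\subseteq J$ put $V_e:=\prod_{j\in e}V_j$, let $\pi_e:V_J\to V_e$ be the coordinate projection and $\mathcal{A}_e:=\{\pi_e^{-1}(E):E\subseteq V_e\}$. $\bigvee$ denotes the smallest $\sigma$-algebra containing the given ones; $|\mathcal{B}|$ is the number of sets in the finite $\sigma$-algebra $\mathcal{B}$. For a finite nonempty set $Z$ and $f:Z\to\mathbb{R}$, $\mathbb{E}(f(x)\mid x\in Z):=|Z|^{-1}\sum_{x\in Z}f(x)$; constraints written after the bar mean uniform averaging over all tuples satisfying them. All objects depend on a parameter $N$ ranging over a sequence tending to infinity while $J,d,H$ are fixed; implicit constants may depend on $J$. $O_y(X)$ denotes a quantity bounded in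 magnitude by $C(y)X$; $o_{N\to\infty}(1)$ a quantity tending to $0$ as $N\to\infty$. Cube notation: for a finite set $e$, $\{0,1\}^e$ is the set of tuples $\omega=(\omega_j)_{j\in e}$ with $\omega_j\in\{0,1\}$, and $0^e$ is the all-zero tuple; for $x^{(0)}_J,x^{(1)}_J\in V_J$, $e\subseteq J$ and $\omega\in\{0,1\}^e$, set $x^{(\omega)}_e:=(x^{(\omega_j)}_j)_{j\in e}\in V_e$ and $x^{(a)}_e:=(x^{(a)}_j)_{j\in e}$ for $a\in\{0,1\}$. The Gowers cube norm of $f:V_e\to\mathbb{R}$ is $\|f\|_{\Box^e}:=\mathbb{E}\big(\prod_{\omega\in\{0,1\}^e}f(x^{(\omega)}_e)\mid x^{(0)}_e,x^{(1)}_e\in V_e\big)^{1/2^{|e|}}$. A system of measures is a family of functions $\nu_e:V_e\to[0,\infty)$, $e\in H$, with $\mathbb{E}(\nu_e(x_e)\mid x_e\in V_e)=1+o_{N\to\infty}(1)$. For $e\in H$ and $f:V_e\to\mathbb{R}$, $\mathcal{D}_ef(x^{(0)}_e):=\mathbb{E}\big(\prod_{\omega\in\{0,1\}^e,\ \omega\neq 0^e}f(x^{(\omega)}_e)\mid x^{(1)}_e\in V_e\big)$. The system is pseudorandom if: (i) $\mathcal{D}_e(\nu_e+1)(x_e)=O(1)$ for all $e\in H$, $x_e\in V_e$; (ii) for every choice of exponents $n_{e,\omega}\in\{0,1\}$, $\mathbb{E}\big(\prod_{e\in H}\prod_{\omega\in\{0,1\}^e}\nu_e(x^{(\omega)}_e)^{n_{e,\omega}}\mid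 x^{(0)}_J,x^{(1)}_J\in V_J\big)=1+o_{N\to\infty}(1)$; (iii) for every $e\in H$, $j\in e$, every choice of $n_{e,\omega}\in\{0,1\}$ and every integer $K\ge0$, $\mathbb{E}\Big(\mathbb{E}\big(\prod_{\omega\in\{0,1\}^e}\nu_e(x^{(\omega)}_e)^{n_{e,\omega}}\mid x^{(0)}_j,x^{(1)}_j\in V_j\big)^K\ \Big|\ x^{(0)}_{e\setminus\{j\}},x^{(1)}_{e\setminus\{j\}}\in V_{e\setminus\{j\}}\Big)=O_K(1)$. *)

theory Defs
  imports "HOL-Analysis.Analysis"
begin

definition avg :: "'a set \<Rightarrow> ('a \<Rightarrow> real) \<Rightarrow> real" where
  "avg S g = (\<Sum>x\<in>S. g x) / real (card S)"

definition Vprod :: "('j \<Rightarrow> 'v set) \<Rightarrow> 'j set \<Rightarrow> ('j \<Rightarrow> 'v) set" where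
  "Vprod V e = PiE e V"

definition proj :: "'j set \<Rightarrow> ('j \<Rightarrow> 'v) \<Rightarrow> ('j \<Rightarrow> 'v)" where
  "proj e x = restrict x e"

definition Aalg :: "('j \<Rightarrow> 'v set) \<Rightarrow> 'j set \<Rightarrow> 'j set \<Rightarrow> ('j \<Rightarrow> 'v) set set" where
  "Aalg V J e = {{x \<in> Vprod V J. proj e x \<in> E} | E. E \<subseteq> Vprod V e}"

(* cube vertex x^(omega)_e; omega in {0,1}^e is encoded as the subset w of e where omega_j = 1 *)
definition cube_pt :: "'j set \<Rightarrow> ('j \<Rightarrow> 'v) \<Rightarrow> ('j \<Rightarrow> 'v) \<Rightarrow> 'j set \<Rightarrow> ('j \<Rightarrow> 'v)" where
  "cube_pt e x0 x1 w = restrict (\<lambda>j. if j \<in> w then x1 j else x0 j) e"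

definition box_norm :: "('j \<Rightarrow> 'v set) \<Rightarrow> 'j set \<Rightarrow> (('j \<Rightarrow> 'v) \<Rightarrow> real) \<Rightarrow> real" where
  "box_norm V e f = root (2 ^ card e)
     (avg (Vprod V e \<times> Vprod V e) (\<lambda>(x0, x1). \<Prod>w\<in>Pow e. f (cube_pt e x0 x1 w)))"

definition dual_fun :: "('j \<Rightarrow> 'v set) \<Rightarrow> 'j set \<Rightarrow> (('j \<Rightarrow> 'v) \<Rightarrow> real) \<Rightarrow> ('j \<Rightarrow> 'v) \<Rightarrow> real" where
  "dual_fun V e f x0 = avg (Vprod V e) (\<lambda>x1. \<Prod>w\<in>Pow e - {{}}. f (cube_pt e x0 x1 w))"

(* hypergraph system, with the vertex sets depending on the asymptotic parameter n *)
definition hypergraph_system :: "'j set \<Rightarrow> (nat \<Rightarrow> 'j \<Rightarrow> 'v set) \<Rightarrow> nat \<Rightarrow> 'j set set \<Rightarrow> bool" where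
  "hypergraph_system J V d H \<longleftrightarrow> finite J \<and> d \<ge> 1 \<and> H \<subseteq> {e. e \<subseteq> J \<and> card e = d} \<and>
     (\<forall>n. \<forall>j\<in>J. finite (V n j) \<and> V n j \<noteq> {})"

definition system_of_measures :: "(nat \<Rightarrow> 'j \<Rightarrow> 'v set) \<Rightarrow> 'j set set \<Rightarrow>
    (nat \<Rightarrow> 'j set \<Rightarrow> ('j \<Rightarrow> 'v) \<Rightarrow> real) \<Rightarrow> bool" where
  "system_of_measures V H \<nu> \<longleftrightarrow>
     (\<forall>n. \<forall>e\<in>H. \<forall>x\<in>Vprod (V n) e. \<nu> n e x \<ge> 0) \<and>
     (\<forall>e\<in>H. (\<lambda>n. avg (Vprod (V n) e) (\<nu> n e)) \<longlonglongrightarrow> 1)"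

(* pseudorandomness conditions (i)-(iii); exponents n_{e,omega} in {0,1} encoded as nat-valued
   functions bounded by 1 *)
definition pseudorandom :: "'j set \<Rightarrow> (nat \<Rightarrow> 'j \<Rightarrow> 'v set) \<Rightarrow> 'j set set \<Rightarrow>
    (nat \<Rightarrow> 'j set \<Rightarrow> ('j \<Rightarrow> 'v) \<Rightarrow> real) \<Rightarrow> bool" where
  "pseudorandom J V H \<nu> \<longleftrightarrow>
     system_of_measures V H \<nu> \<and>
     (\<exists>C. \<forall>n. \<forall>e\<in>H. \<forall>x\<in>Vprod (V n) e.
         \<bar>dual_fun (V n) e (\<lambda>y. \<nu> n e y + 1) x\<bar> \<le> C) \<and>
     (\<forall>ex :: 'j set \<Rightarrow> 'j set \<Rightarrow> nat. (\<forall>e w. ex e w \<le> 1) \<longrightarrow>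
        (\<lambda>n. avg (Vprod (V n) J \<times> Vprod (V n) J)
            (\<lambda>(x0, x1). \<Prod>e\<in>H. \<Prod>w\<in>Pow e. \<nu> n e (cube_pt e x0 x1 w) ^ ex e w))
        \<longlonglongrightarrow> 1) \<and>
     (\<forall>e\<in>H. \<forall>j\<in>e. \<forall>ex :: 'j set \<Rightarrow> nat. (\<forall>w. ex w \<le> 1) \<longrightarrow> (\<forall>K::nat. \<exists>C. \<forall>n.
        \<bar>avg (Vprod (V n) (e - {j}) \<times> Vprod (V n) (e - {j}))
          (\<lambda>(y0, y1). (avg (V n j \<times> V n j)
             (\<lambda>(a0, a1). \<Prod>w\<in>Pow e. \<nu> n e (cube_pt e (y0(j := a0)) (y1(j := a1)) w) ^ ex w)) ^ K)\<bar>
        \<le> C))"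

end

theory Submission
  imports Defs
begin


lemma avg_times: "avg (A \<times> B) h = avg A (\<lambda>a. avg B (\<lambda>b. h (a,b)))"
  unfolding avg_def
  by (simp add: sum.cartesian_product card_cartesian_product sum_divide_distrib[symmetric] mult.commute)

lemma avg_swap: "avg A (\<lambda>a. avg B (\<lambda>b. h a b)) = avg B (\<lambda>b. avg A (\<lambda>a. h a b))"
  unfolding avg_def
  by (simp add: sum_divide_distrib[symmetric] sum.swap[of _ A] mult.commute)

lemma avg_insert:
  assumes "i \<notin> D"
  shows "avg (Vprod V (insert i D)) h = avg (V i) (\<lambda>a. avg (Vprod V D) (\<lambda>y. h (y(i:=a))))"
proof -
  have "avg (Vprod V (insert i D)) h = avg (V i \<times> Vprod V D) (\<lambda>(a,y). h (y(i:=a)))"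
    unfolding avg_def Vprod_def PiE_insert_eq
    using inj_combinator[OF assms, of V]
    by (simp add: sum.reindex card_image case_prod_unfold)
  then show ?thesis by (simp add: avg_times)
qed

lemma avg_mono: "(\<And>x. x \<in> S \<Longrightarrow> f x \<le> g x) \<Longrightarrow> avg S f \<le> avg S g"
  unfolding avg_def by (intro divide_right_mono sum_mono) auto

lemma avg_cong: "(\<And>x. x \<in> S \<Longrightarrow> f x = g x) \<Longrightarrow> avg S f = avg S g"
  unfolding avg_def by (metis sum.cong)

lemma avg_cmult: "avg S (\<lambda>x. c * f x) = c * avg S f"
  unfolding avg_def by (simp add: sum_distrib_left)

lemma avg_add: "avg S (\<lambda>x. f x + g x) = avg S f + avg S g"
  unfolding avg_def by (simp add: sum.distrib add_divide_distrib)

lemma avg_const: "finite S \<Longrightarrow> S \<noteq> {} \<Longrightarrow> avg S (\<lambda>x. c) = c"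
  unfolding avg_def by simp

lemma avg_nonneg: "(\<And>x. x \<in> S \<Longrightarrow> 0 \<le> f x) \<Longrightarrow> 0 \<le> avg S f"
  unfolding avg_def by (simp add: sum_nonneg)

lemma avg_sq: "(avg A U)^2 = avg (A \<times> A) (\<lambda>(a,b). U a * U b)"
  unfolding avg_times unfolding avg_def
  by (simp add: power2_eq_square sum_product sum_divide_distrib[symmetric])

lemma avg_cs:
  assumes "finite S" "S \<noteq> {}"
  shows "(avg S Z)^2 \<le> avg S (\<lambda>x. (Z x)^2)"
proof -
  define m where "m = avg S Z"
  have "0 \<le> avg S (\<lambda>x. (Z x - m)^2)" by (rule avg_nonneg) simp
  also have "avg S (\<lambda>x. (Z x - m)^2) = avg S (\<lambda>x. (Z x)^2 + (-2*m) * Z x + m^2)"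
    by (rule avg_cong) (simp add: power2_eq_square algebra_simps)
  also have "\<dots> = avg S (\<lambda>x. (Z x)^2) + (-2*m) * avg S Z + m^2"
    using assms by (simp only: avg_add avg_cmult avg_const[OF assms])
  also have "\<dots> = avg S (\<lambda>x. (Z x)^2) - m^2" by (simp add: m_def power2_eq_square)
  finally show ?thesis unfolding m_def by (simp add: power2_eq_square)
qed

lemma avg_jensen:
  assumes "finite S" "S \<noteq> {}"
  shows "(avg S Z)^(2^k) \<le> avg S (\<lambda>x. (Z x)^(2^k))"
proof (induction k arbitrary: Z)
  case 0 then show ?case by simp
next
  case (Suc k)
  have "(avg S Z)^(2^Suc k) = ((avg S Z)^2)^(2^k)" by (simp add: power_mult[symmetric] mult.commute)
  also have "\<dots> \<le> (avg S (\<lambda>x. (Z x)^2))^(2^k)"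
    by (rule power_mono[OF avg_cs[OF assms]]) simp
  also have "\<dots> \<le> avg S (\<lambda>x. ((Z x)^2)^(2^k))" by (rule Suc)
  also have "\<dots> = avg S (\<lambda>x. (Z x)^(2^Suc k))" by (simp add: power_mult[symmetric] mult.commute)
  finally show ?case .
qed

definition boxavg :: "('j \<Rightarrow> 'v set) \<Rightarrow> 'j set \<Rightarrow> (('j \<Rightarrow> 'v) \<Rightarrow> real) \<Rightarrow> real" where
  "boxavg V e f = avg (Vprod V e \<times> Vprod V e) (\<lambda>(x0, x1). \<Prod>w\<in>Pow e. f (cube_pt e x0 x1 w))"

lemma cube_pt_upd0:
  assumes "i \<notin> e0" "w \<subseteq> e0"
  shows "cube_pt (insert i e0) (z0(i:=a)) (z1(i:=b)) w = (cube_pt e0 z0 z1 w)(i:=a)"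
  using assms by (auto simp: cube_pt_def fun_eq_iff)

lemma cube_pt_upd1:
  assumes "i \<notin> e0" "w \<subseteq> e0"
  shows "cube_pt (insert i e0) (z0(i:=a)) (z1(i:=b)) (insert i w) = (cube_pt e0 z0 z1 w)(i:=b)"
  using assms by (auto simp: cube_pt_def fun_eq_iff)

lemma prod_Pow_insert:
  assumes "i \<notin> e0" "finite e0"
  shows "(\<Prod>w\<in>Pow (insert i e0). f (cube_pt (insert i e0) (z0(i:=a)) (z1(i:=b)) w))
       = (\<Prod>w\<in>Pow e0. f ((cube_pt e0 z0 z1 w)(i:=a)) * f ((cube_pt e0 z0 z1 w)(i:=b)))"
proof -
  have disj: "Pow e0 \<inter> insert i ` Pow e0 = {}" using assms(1) by auto
  have inj: "inj_on (insert i) (Pow e0)" using assms(1) by (auto simp: inj_on_def)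
  have "(\<Prod>w\<in>Pow (insert i e0). f (cube_pt (insert i e0) (z0(i:=a)) (z1(i:=b)) w))
     = (\<Prod>w\<in>Pow e0. f (cube_pt (insert i e0) (z0(i:=a)) (z1(i:=b)) w)) *
       (\<Prod>w\<in>insert i ` Pow e0. f (cube_pt (insert i e0) (z0(i:=a)) (z1(i:=b)) w))"
    unfolding Pow_insert using assms disj by (intro prod.union_disjoint) auto
  also have "(\<Prod>w\<in>insert i ` Pow e0. f (cube_pt (insert i e0) (z0(i:=a)) (z1(i:=b)) w))
      = (\<Prod>w\<in>Pow e0. f (cube_pt (insert i e0) (z0(i:=a)) (z1(i:=b)) (insert i w)))"
    using inj by (simp add: prod.reindex)
  also have "\<dots> = (\<Prod>w\<in>Pow e0. f ((cube_pt e0 z0 z1 w)(i:=b)))"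
    using assms by (intro prod.cong) (auto simp: cube_pt_upd1)
  also have "(\<Prod>w\<in>Pow e0. f (cube_pt (insert i e0) (z0(i:=a)) (z1(i:=b)) w))
      = (\<Prod>w\<in>Pow e0. f ((cube_pt e0 z0 z1 w)(i:=a)))"
    using assms by (intro prod.cong) (auto simp: cube_pt_upd0)
  finally show ?thesis by (simp only: prod.distrib)
qed

lemma boxavg_insert:
  assumes "i \<notin> e0" "finite e0"
  shows "boxavg V (insert i e0) f =
    avg (V i \<times> V i) (\<lambda>(a,b). boxavg V e0 (\<lambda>z. f (z(i:=a)) * f (z(i:=b))))"
proof -
  have "boxavg V (insert i e0) f = avg (V i) (\<lambda>a. avg (Vprod V e0) (\<lambda>z0. avg (V i) (\<lambda>b. avg (Vprod V e0)
     (\<lambda>z1. \<Prod>w\<in>Pow (insert i e0). f (cube_pt (insert i e0) (z0(i:=a)) (z1(i:=b)) w)))))"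
    unfolding boxavg_def avg_times by (simp add: avg_insert[OF assms(1)])
  also have "\<dots> = avg (V i) (\<lambda>a. avg (V i) (\<lambda>b. avg (Vprod V e0) (\<lambda>z0. avg (Vprod V e0)
     (\<lambda>z1. \<Prod>w\<in>Pow e0. f ((cube_pt e0 z0 z1 w)(i:=a)) * f ((cube_pt e0 z0 z1 w)(i:=b))))))"
    by (simp add: prod_Pow_insert[OF assms] avg_swap[where A="Vprod V e0" and B="V i"])
  also have "\<dots> = avg (V i \<times> V i) (\<lambda>(a,b). boxavg V e0 (\<lambda>z. f (z(i:=a)) * f (z(i:=b))))"
    unfolding boxavg_def avg_times by simp
  finally show ?thesis .
qed

lemma Vprod_upd: "x \<in> Vprod V D \<Longrightarrow> a \<in> V i \<Longrightarrow> x(i:=a) \<in> Vprod V (insert i D)"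
  unfolding Vprod_def by (auto simp: PiE_iff)

lemma Vprod_finite: "finite D \<Longrightarrow> \<forall>j\<in>D. finite (V j) \<and> V j \<noteq> {} \<Longrightarrow> finite (Vprod V D)"
  unfolding Vprod_def by (auto intro: finite_PiE)

lemma Vprod_ne: "\<forall>j\<in>D. finite (V j) \<and> V j \<noteq> {} \<Longrightarrow> Vprod V D \<noteq> {}"
  unfolding Vprod_def by (auto simp: PiE_eq_empty_iff)

lemma gcs:
  assumes "finite D" "\<forall>j\<in>D. finite (V j) \<and> V j \<noteq> {}" "e \<subseteq> D"
    "\<forall>j\<in>e. \<forall>x\<in>Vprod V D. \<bar>g j x\<bar> \<le> 1"
    "\<forall>j\<in>e. \<forall>x\<in>Vprod V D. \<forall>a\<in>V j. g j (x(j:=a)) = g j x"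
  shows "(avg (Vprod V D) (\<lambda>x. (\<Prod>j\<in>e. g j x) * f (proj e x)))^(2^card e) \<le> boxavg V e f"
  using assms
proof (induction D arbitrary: e g f rule: finite_induct)
  case empty
  then show ?case
    by (simp add: Vprod_def boxavg_def avg_def proj_def cube_pt_def)
next
  case (insert i D)
  note fin = insert.prems(1)
  have finD: "\<forall>j\<in>D. finite (V j) \<and> V j \<noteq> {}" using fin by auto
  have finVi: "finite (V i)" "V i \<noteq> {}" using fin by auto
  have finVD: "finite (Vprod V D)" "Vprod V D \<noteq> {}"
    using Vprod_finite[OF insert.hyps(1) finD] Vprod_ne[OF finD] by auto
  show ?case
  proof (cases "i \<in> e")
    case False
    hence eD: "e \<subseteq> D" using insert.prems by auto
    define Z where "Z a = avg (Vprod V D) (\<lambda>y. (\<Prod>j\<in>e. g j (y(i:=a))) * f (proj e y))" for a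
    have proj_eq: "proj e (y(i:=a)) = proj e y" for y a
      using False by (auto simp: proj_def fun_eq_iff)
    have L: "avg (Vprod V (insert i D)) (\<lambda>x. (\<Prod>j\<in>e. g j x) * f (proj e x)) = avg (V i) Z"
      unfolding avg_insert[OF insert.hyps(2)] Z_def proj_eq ..
    have Zb: "(Z a)^(2^card e) \<le> boxavg V e f" if a: "a \<in> V i" for a
      unfolding Z_def
    proof (rule insert.IH[OF finD eD])
      show "\<forall>j\<in>e. \<forall>x\<in>Vprod V D. \<bar>g j (x(i := a))\<bar> \<le> 1"
        using insert.prems(3) Vprod_upd[where V=V and D=D and i=i, OF _ a] by blast
      show "\<forall>j\<in>e. \<forall>x\<in>Vprod V D. \<forall>b\<in>V j. g j (x(j := b, i := a)) = g j (x(i := a))"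
      proof (intro ballI)
        fix j x b assume j: "j \<in> e" and x: "x \<in> Vprod V D" and b: "b \<in> V j"
        have "j \<noteq> i" using j False by auto
        hence "x(j := b, i := a) = (x(i:=a))(j:=b)" by (simp add: fun_upd_twist)
        moreover have "g j ((x(i:=a))(j:=b)) = g j (x(i:=a))"
          using insert.prems(4) j Vprod_upd[OF x a] b by blast
        ultimately show "g j (x(j := b, i := a)) = g j (x(i := a))" by simp
      qed
    qed
    have "(avg (V i) Z)^(2^card e) \<le> avg (V i) (\<lambda>a. (Z a)^(2^card e))"
      by (rule avg_jensen[OF finVi])
    also have "\<dots> \<le> avg (V i) (\<lambda>a. boxavg V e f)" by (rule avg_mono) (rule Zb)
    also have "\<dots> = boxavg V e f" using finVi by (simp add: avg_const)
    finally show ?thesis unfolding L .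
  next
    case True
    define e0 where "e0 = e - {i}"
    have e: "e = insert i e0" and i0: "i \<notin> e0" using True e0_def by auto
    have e0D: "e0 \<subseteq> D" using insert.prems(2) insert.hyps(2) e0_def by auto
    have fe0: "finite e0" using e0D insert.hyps(1) finite_subset by blast
    have ce: "card e = Suc (card e0)" using e i0 fe0 by simp
    obtain c where c: "c \<in> V i" using finVi by auto
    define G where "G y = g i (y(i:=c))" for y
    define U where "U a y = (\<Prod>j\<in>e0. g j (y(i:=a))) * f (proj e (y(i:=a)))" for a y
    have GU: "g i (y(i:=a)) = G y" if "y \<in> Vprod V D" "a \<in> V i" for y a
    proof -
      have "g i ((y(i:=c))(i:=a)) = g i (y(i:=c))"
        using insert.prems(4) True Vprod_upd[OF that(1) c] that(2) by blast
      then show ?thesis by (simp add: G_def)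
    qed
    have Gb: "\<bar>G y\<bar> \<le> 1" if "y \<in> Vprod V D" for y
      unfolding G_def using insert.prems(3) True Vprod_upd[OF that c] by blast
    define S where "S = avg (Vprod V D) (\<lambda>y. G y * avg (V i) (\<lambda>a. U a y))"
    have L: "avg (Vprod V (insert i D)) (\<lambda>x. (\<Prod>j\<in>e. g j x) * f (proj e x)) = S"
    proof -
      have "avg (Vprod V (insert i D)) (\<lambda>x. (\<Prod>j\<in>e. g j x) * f (proj e x))
          = avg (V i) (\<lambda>a. avg (Vprod V D) (\<lambda>y. G y * U a y))"
        unfolding avg_insert[OF insert.hyps(2)]
        by (intro avg_cong) (simp add: e i0 fe0 GU U_def)
      also have "\<dots> = S" unfolding S_def avg_swap[of "V i"] avg_cmult ..
      finally show ?thesis .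
    qed
    define Z where "Z ab = avg (Vprod V D) (\<lambda>y. U (fst ab) y * U (snd ab) y)" for ab
    have S2: "S^2 \<le> avg (V i \<times> V i) Z"
    proof -
      have "S^2 \<le> avg (Vprod V D) (\<lambda>y. (G y * avg (V i) (\<lambda>a. U a y))^2)"
        unfolding S_def by (rule avg_cs[OF finVD])
      also have "\<dots> \<le> avg (Vprod V D) (\<lambda>y. (avg (V i) (\<lambda>a. U a y))^2)"
      proof (rule avg_mono)
        fix y assume y: "y \<in> Vprod V D"
        have "(G y)^2 \<le> 1" using Gb[OF y] by (simp add: abs_square_le_1)
        then show "(G y * avg (V i) (\<lambda>a. U a y))^2 \<le> (avg (V i) (\<lambda>a. U a y))^2"
          by (simp add: power_mult_distrib mult_left_le_one_le)
      qed
      also have "\<dots> = avg (V i \<times> V i) Z"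
        unfolding avg_sq Z_def avg_swap[of "Vprod V D"]
        by (simp add: case_prod_unfold)
      finally show ?thesis .
    qed
    have Zb: "(Z ab)^(2^card e0) \<le> boxavg V e0 (\<lambda>z. f (z(i:=fst ab)) * f (z(i:=snd ab)))"
      if ab: "ab \<in> V i \<times> V i" for ab
    proof -
      obtain a b where abe: "ab = (a,b)" and a: "a \<in> V i" and b: "b \<in> V i" using ab by auto
      have pe: "proj e (y(i:=t)) = (proj e0 y)(i:=t)" for y t
        using i0 e by (auto simp: proj_def fun_eq_iff)
      have "Z ab = avg (Vprod V D) (\<lambda>y. (\<Prod>j\<in>e0. g j (y(i:=a)) * g j (y(i:=b))) *
           (\<lambda>z. f (z(i:=a)) * f (z(i:=b))) (proj e0 y))"
        unfolding Z_def U_def abe pe by (simp add: prod.distrib algebra_simps)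
      also have "\<dots>^(2^card e0) \<le> boxavg V e0 (\<lambda>z. f (z(i:=a)) * f (z(i:=b)))"
      proof (rule insert.IH[OF finD e0D])
        show "\<forall>j\<in>e0. \<forall>x\<in>Vprod V D. \<bar>g j (x(i := a)) * g j (x(i := b))\<bar> \<le> 1"
        proof (intro ballI)
          fix j x assume j: "j \<in> e0" and x: "x \<in> Vprod V D"
          have "\<bar>g j (x(i := a))\<bar> \<le> 1" "\<bar>g j (x(i := b))\<bar> \<le> 1"
            using insert.prems(3) e j Vprod_upd[OF x a] Vprod_upd[OF x b] by auto
          then show "\<bar>g j (x(i := a)) * g j (x(i := b))\<bar> \<le> 1"
            by (simp add: abs_mult mult_le_one)
        qed
        show "\<forall>j\<in>e0. \<forall>x\<in>Vprod V D. \<forall>t\<in>V j.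
          g j (x(j := t, i := a)) * g j (x(j := t, i := b)) = g j (x(i := a)) * g j (x(i := b))"
        proof (intro ballI)
          fix j x t assume j: "j \<in> e0" and x: "x \<in> Vprod V D" and t: "t \<in> V j"
          have "j \<noteq> i" using j i0 by auto
          hence "x(j := t, i := a) = (x(i:=a))(j:=t)" "x(j := t, i := b) = (x(i:=b))(j:=t)"
            by (simp_all add: fun_upd_twist)
          moreover have "g j ((x(i:=a))(j:=t)) = g j (x(i:=a))" "g j ((x(i:=b))(j:=t)) = g j (x(i:=b))"
            using insert.prems(4) e j Vprod_upd[OF x a] Vprod_upd[OF x b] t by blast+
          ultimately show "g j (x(j := t, i := a)) * g j (x(j := t, i := b)) = g j (x(i := a)) * g j (x(i := b))"
            by simp
        qed
      qed
      finally show ?thesis unfolding abe by (simp only: fst_conv snd_conv)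
    qed
    have finVV: "finite (V i \<times> V i)" "V i \<times> V i \<noteq> {}" using finVi by auto
    have "S^(2^card e) = (S^2)^(2^card e0)" by (simp add: ce power_mult[symmetric])
    also have "\<dots> \<le> (avg (V i \<times> V i) Z)^(2^card e0)" by (rule power_mono[OF S2]) simp
    also have "\<dots> \<le> avg (V i \<times> V i) (\<lambda>ab. (Z ab)^(2^card e0))" by (rule avg_jensen[OF finVV])
    also have "\<dots> \<le> avg (V i \<times> V i) (\<lambda>ab. boxavg V e0 (\<lambda>z. f (z(i:=fst ab)) * f (z(i:=snd ab))))"
      by (rule avg_mono) (rule Zb)
    also have "\<dots> = boxavg V e f"
      unfolding e boxavg_insert[OF i0 fe0] by (simp add: case_prod_unfold)
    finally show ?thesis unfolding L .
  qed
qed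

lemma avg_sum: "avg S (\<lambda>x. \<Sum>t\<in>T. F t x) = (\<Sum>t\<in>T. avg S (F t))"
  unfolding avg_def by (simp add: sum.swap[of _ S] sum_divide_distrib[symmetric])

lemma gcs_norm:
  assumes "finite D" "\<forall>j\<in>D. finite (V j) \<and> V j \<noteq> {}" "e \<subseteq> D" "e \<noteq> {}"
    "\<forall>j\<in>e. \<forall>x\<in>Vprod V D. \<bar>g j x\<bar> \<le> 1"
    "\<forall>j\<in>e. \<forall>x\<in>Vprod V D. \<forall>a\<in>V j. g j (x(j:=a)) = g j x"
  shows "\<bar>avg (Vprod V D) (\<lambda>x. (\<Prod>j\<in>e. g j x) * f (proj e x))\<bar> \<le> box_norm V e f"
proof -
  define t where "t = avg (Vprod V D) (\<lambda>x. (\<Prod>j\<in>e. g j x) * f (proj e x))"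
  have fe: "finite e" using assms(1,3) finite_subset by blast
  have pos: "0 < (2::nat)^card e" by simp
  have ev: "even ((2::nat)^card e)" using assms(4) fe by (simp add: card_gt_0_iff)
  have le: "t^(2^card e) \<le> boxavg V e f" unfolding t_def by (rule gcs[OF assms(1,2,3,5,6)])
  have "\<bar>t\<bar> = root (2^card e) (\<bar>t\<bar>^(2^card e))" by (simp add: real_root_power_cancel)
  also have "\<bar>t\<bar>^(2^card e) = t^(2^card e)" using ev by (simp add: power_even_abs)
  also have "root (2^card e) (t^(2^card e)) \<le> root (2^card e) (boxavg V e f)"
    by (rule real_root_le_mono[OF pos le])
  finally show ?thesis unfolding t_def box_norm_def boxavg_def .
qed

lemma main_inner:
  fixes W :: "'j \<Rightarrow> 'v set" and B :: "'j set \<Rightarrow> ('j \<Rightarrow> 'v) set set"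
  assumes finJ: "finite J" and finW: "\<forall>j\<in>J. finite (W j) \<and> W j \<noteq> {}"
    and eJ: "e \<subseteq> J" and ce: "card e = d" and d1: "d \<ge> 1"
    and Bh: "\<forall>e'. e' \<subseteq> J \<and> card e' < d \<longrightarrow>
            sigma_algebra (Vprod W J) (B e') \<and> B e' \<subseteq> Aalg W J e' \<and> card (B e') \<le> M"
    and E: "E' \<in> sigma_sets (Vprod W J) (\<Union>e'\<in>{e'. e' \<subset> e}. B e')"
  shows "\<bar>avg (Vprod W J) (\<lambda>x. indicator E' x * f (proj e x))\<bar> \<le> 2^(M*2^d) * box_norm W e f"
proof -
  define \<Omega> where "\<Omega> = Vprod W J"
  define P where "P = {e'. e' \<subset> e}"
  have fe: "finite e" using finJ eJ finite_subset by blast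
  have ene: "e \<noteq> {}" using ce d1 by auto
  have finP: "finite P"
  proof (rule finite_subset[of _ "Pow e"])
    show "P \<subseteq> Pow e" unfolding P_def by auto
  qed (simp add: fe)
  have cP: "card P \<le> 2^d"
  proof -
    have "card P \<le> card (Pow e)" unfolding P_def using fe by (intro card_mono) auto
    then show ?thesis using fe ce by (simp add: card_Pow)
  qed
  have BP: "sigma_algebra \<Omega> (B e') \<and> B e' \<subseteq> Aalg W J e' \<and> card (B e') \<le> M" if "e' \<in> P" for e'
  proof -
    have "e' \<subseteq> J" "card e' < d" using that eJ fe ce unfolding P_def by (auto intro: psubset_card_mono)
    then show ?thesis using Bh unfolding \<Omega>_def by blast
  qed
  have finO: "finite \<Omega>" unfolding \<Omega>_def using Vprod_finite[OF finJ finW] .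
  have BA: "A \<subseteq> \<Omega>" if "e' \<in> P" "A \<in> B e'" for e' A
    using BP[OF that(1)] that(2) unfolding Aalg_def \<Omega>_def by auto
  have finB: "finite (B e')" if "e' \<in> P" for e'
  proof (rule finite_subset[of _ "Pow \<Omega>"])
    show "B e' \<subseteq> Pow \<Omega>" using BA[OF that] by auto
  qed (simp add: finO)
  define \<sigma> where "\<sigma> x = restrict (\<lambda>e'. {A\<in>B e'. x\<in>A}) P" for x
  have fib: "\<forall>x\<in>\<Omega>. \<forall>y\<in>\<Omega>. \<sigma> x = \<sigma> y \<longrightarrow> (x\<in>S \<longleftrightarrow> y\<in>S)"
    if "S \<in> sigma_sets \<Omega> (\<Union>e'\<in>P. B e')" for S
    using that
  proof (induction rule: sigma_sets.induct)
    case (Basic A)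
    then obtain e' where e': "e' \<in> P" "A \<in> B e'" by auto
    show ?case
    proof (intro ballI impI)
      fix x y assume "x \<in> \<Omega>" "y \<in> \<Omega>" "\<sigma> x = \<sigma> y"
      then have "\<sigma> x e' = \<sigma> y e'" by simp
      then have "{A\<in>B e'. x\<in>A} = {A\<in>B e'. y\<in>A}" unfolding \<sigma>_def using e'(1) by simp
      then show "x \<in> A \<longleftrightarrow> y \<in> A" using e'(2) by blast
    qed
  next
    case Empty then show ?case by simp
  next
    case (Compl a)
    show ?case
    proof (intro ballI impI)
      fix x y assume "x \<in> \<Omega>" "y \<in> \<Omega>" "\<sigma> x = \<sigma> y"
      then have "x \<in> a \<longleftrightarrow> y \<in> a" using Compl.IH by blast
      then show "x \<in> \<Omega> - a \<longleftrightarrow> y \<in> \<Omega> - a" using \<open>x \<in> \<Omega>\<close> \<open>y \<in> \<Omega>\<close> by blast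
    qed
  next
    case (Union a)
    show ?case
    proof (intro ballI impI)
      fix x y assume "x \<in> \<Omega>" "y \<in> \<Omega>" "\<sigma> x = \<sigma> y"
      then have "x \<in> a i \<longleftrightarrow> y \<in> a i" for i using Union.IH by blast
      then show "x \<in> \<Union> (range a) \<longleftrightarrow> y \<in> \<Union> (range a)" by blast
    qed
  qed
  have EO: "E' \<subseteq> \<Omega>"
  proof (rule sigma_sets_into_sp[of "\<Union>e'\<in>P. B e'" \<Omega>])
    show "\<Union> (B ` P) \<subseteq> Pow \<Omega>" using BA by blast
    show "E' \<in> sigma_sets \<Omega> (\<Union> (B ` P))" using E unfolding \<Omega>_def P_def .
  qed
  define T where "T = \<sigma> ` E'"
  have TPi: "T \<subseteq> PiE P (\<lambda>e'. Pow (B e'))" unfolding T_def \<sigma>_def by auto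
  have finT: "finite T" using finite_subset[OF TPi] finP finB by (auto intro!: finite_PiE)
  have cT: "real (card T) \<le> 2^(M*2^d)"
  proof -
    have "card T \<le> card (PiE P (\<lambda>e'. Pow (B e')))"
      using TPi finP finB by (intro card_mono finite_PiE) auto
    also have "\<dots> = (\<Prod>e'\<in>P. 2^card (B e'))" using finP finB by (simp add: card_PiE card_Pow)
    also have "\<dots> \<le> (\<Prod>e'\<in>P. (2::nat)^M)" using BP by (intro prod_mono) auto
    also have "\<dots> = 2^(M * card P)" by (simp add: power_mult)
    also have "\<dots> \<le> 2^(M * 2^d)" using cP by (intro power_increasing) auto
    finally have "card T \<le> 2^(M * 2^d)" .
    then have "real (card T) \<le> real (2^(M * 2^d))" by (rule of_nat_mono)
    then show ?thesis by simp
  qed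
  define h where "h \<tau> e' x = (if {A\<in>B e'. x\<in>A} = \<tau> e' then 1 else (0::real))" for \<tau> e' x
  have ind: "indicator E' x = (\<Sum>\<tau>\<in>T. \<Prod>e'\<in>P. h \<tau> e' x)" if x: "x \<in> \<Omega>" for x
  proof -
    have pr: "(\<Prod>e'\<in>P. h \<tau> e' x) = (if \<sigma> x = \<tau> then 1 else 0)" if "\<tau> \<in> T" for \<tau>
    proof -
      have "\<tau> \<in> PiE P (\<lambda>e'. Pow (B e'))" using that TPi by blast
      then have ext: "\<tau> \<in> extensional P" by (simp add: PiE_iff)
      show ?thesis
      proof (cases "\<sigma> x = \<tau>")
        case True
        have "\<forall>e'\<in>P. h \<tau> e' x = 1" unfolding h_def using True[symmetric] by (simp add: \<sigma>_def)
        then show ?thesis using True by simp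
      next
        case False
        have "\<exists>e'\<in>P. {A\<in>B e'. x\<in>A} \<noteq> \<tau> e'"
        proof (rule ccontr)
          assume "\<not> (\<exists>e'\<in>P. {A\<in>B e'. x\<in>A} \<noteq> \<tau> e')"
          then have "\<forall>e'\<in>P. \<sigma> x e' = \<tau> e'" unfolding \<sigma>_def by simp
          then have "\<sigma> x = \<tau>" using ext by (intro extensionalityI[of _ P]) (auto simp: \<sigma>_def)
          then show False using False by simp
        qed
        then obtain e' where "e' \<in> P" "{A\<in>B e'. x\<in>A} \<noteq> \<tau> e'" by blast
        then have "(\<Prod>e'\<in>P. h \<tau> e' x) = 0" using finP unfolding h_def
          by (intro prod_zero) auto
        then show ?thesis using False by simp
      qed
    qed
    have "(\<Sum>\<tau>\<in>T. \<Prod>e'\<in>P. h \<tau> e' x) = (\<Sum>\<tau>\<in>T. if \<sigma> x = \<tau> then 1 else 0)"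
      using pr by (intro sum.cong) auto
    also have "\<dots> = (if \<sigma> x \<in> T then 1 else 0)" using finT by (simp add: sum.delta)
    also have "\<dots> = indicator E' x"
    proof -
      have "\<sigma> x \<in> T \<longleftrightarrow> x \<in> E'"
        using fib[OF E[folded \<Omega>_def P_def]] x EO unfolding T_def by blast
      then show ?thesis by (simp add: indicator_def)
    qed
    finally show ?thesis by simp
  qed
  define ch where "ch e' = (SOME j. j \<in> e - e')" for e'
  have ch: "ch e' \<in> e - e'" if "e' \<in> P" for e'
  proof -
    have "\<exists>j. j \<in> e - e'" using that unfolding P_def by auto
    then show ?thesis unfolding ch_def by (rule someI_ex)
  qed
  have hinv: "h \<tau> e' (x(j:=a)) = h \<tau> e' x" if "e' \<in> P" "j \<in> J" "j \<notin> e'" "x \<in> \<Omega>" "a \<in> W j" for \<tau> e' x j a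
  proof -
    have xj: "x(j:=a) \<in> \<Omega>" using Vprod_upd[of x W J a j] that(2,4,5) insert_absorb[OF that(2)]
      unfolding \<Omega>_def by simp
    have pj: "proj e' (x(j:=a)) = proj e' x" using that(3) by (auto simp: proj_def fun_eq_iff)
    have "A \<in> B e' \<Longrightarrow> x(j:=a) \<in> A \<longleftrightarrow> x \<in> A" for A
      using BP[OF that(1)] xj that(4) pj unfolding Aalg_def \<Omega>_def by auto
    then have "{A\<in>B e'. x(j:=a)\<in>A} = {A\<in>B e'. x\<in>A}" by blast
    then show ?thesis unfolding h_def by simp
  qed
  have termb: "\<bar>avg \<Omega> (\<lambda>x. (\<Prod>e'\<in>P. h \<tau> e' x) * f (proj e x))\<bar> \<le> box_norm W e f" for \<tau>
  proof -
    define g where "g j x = (\<Prod>e'\<in>{e'\<in>P. ch e' = j}. h \<tau> e' x)" for j x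
    have grp: "(\<Prod>e'\<in>P. h \<tau> e' x) = (\<Prod>j\<in>e. g j x)" for x
    proof -
      have "ch ` P \<subseteq> e" using ch by blast
      then show ?thesis unfolding g_def using prod.group[OF finP fe, of ch "\<lambda>e'. h \<tau> e' x"] by simp
    qed
    have "\<bar>avg \<Omega> (\<lambda>x. (\<Prod>j\<in>e. g j x) * f (proj e x))\<bar> \<le> box_norm W e f"
      unfolding \<Omega>_def
    proof (rule gcs_norm[OF finJ finW eJ ene])
      show "\<forall>j\<in>e. \<forall>x\<in>Vprod W J. \<bar>g j x\<bar> \<le> 1"
        unfolding g_def abs_prod by (auto intro!: prod_le_1 simp: h_def)
      show "\<forall>j\<in>e. \<forall>x\<in>Vprod W J. \<forall>a\<in>W j. g j (x(j := a)) = g j x"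
      proof (intro ballI)
        fix j x a assume j: "j \<in> e" and x: "x \<in> Vprod W J" and a: "a \<in> W j"
        show "g j (x(j := a)) = g j x" unfolding g_def
        proof (rule prod.cong[OF refl])
          fix e' assume e': "e' \<in> {e' \<in> P. ch e' = j}"
          then have "j \<notin> e'" using ch by blast
          then show "h \<tau> e' (x(j := a)) = h \<tau> e' x"
            using hinv e' j eJ x a unfolding \<Omega>_def by blast
        qed
      qed
    qed
    then show ?thesis unfolding grp .
  qed
  have bn: "0 \<le> box_norm W e f"
  proof -
    have "\<bar>avg (Vprod W J) (\<lambda>x. (\<Prod>j\<in>e. (\<lambda>_ _. 1::real) j x) * f (proj e x))\<bar> \<le> box_norm W e f"
      by (rule gcs_norm[OF finJ finW eJ ene]) auto
    then show ?thesis by (rule order_trans[OF abs_ge_zero])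
  qed
  have "avg \<Omega> (\<lambda>x. indicator E' x * f (proj e x))
      = avg \<Omega> (\<lambda>x. \<Sum>\<tau>\<in>T. (\<Prod>e'\<in>P. h \<tau> e' x) * f (proj e x))"
    by (intro avg_cong) (simp add: ind sum_distrib_right)
  also have "\<dots> = (\<Sum>\<tau>\<in>T. avg \<Omega> (\<lambda>x. (\<Prod>e'\<in>P. h \<tau> e' x) * f (proj e x)))" by (rule avg_sum)
  finally have "\<bar>avg \<Omega> (\<lambda>x. indicator E' x * f (proj e x))\<bar>
     \<le> (\<Sum>\<tau>\<in>T. \<bar>avg \<Omega> (\<lambda>x. (\<Prod>e'\<in>P. h \<tau> e' x) * f (proj e x))\<bar>)"
    by (simp add: sum_abs)
  also have "\<dots> \<le> (\<Sum>\<tau>\<in>T. box_norm W e f)" by (intro sum_mono termb)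
  also have "\<dots> = real (card T) * box_norm W e f" by simp
  also have "\<dots> \<le> 2^(M*2^d) * box_norm W e f" by (rule mult_right_mono[OF cT bn])
  finally show ?thesis unfolding \<Omega>_def .
qed


theorem mainTheorem6:
  fixes J :: "'j set" and d :: nat and H :: "'j set set" and M :: nat
  assumes "finite J" and "d \<ge> 1" and "H \<subseteq> {e. e \<subseteq> J \<and> card e = d}"
  shows "\<exists>C::real. \<forall>(V :: nat \<Rightarrow> 'j \<Rightarrow> 'v set) \<nu>.
     hypergraph_system J V d H \<longrightarrow> pseudorandom J V H \<nu> \<longrightarrow>
     (\<forall>n (B :: 'j set \<Rightarrow> ('j \<Rightarrow> 'v) set set) e E' (f :: ('j \<Rightarrow> 'v) \<Rightarrow> real).
        (\<forall>e'. e' \<subseteq> J \<and> card e' < d \<longrightarrow>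
            sigma_algebra (Vprod (V n) J) (B e') \<and> B e' \<subseteq> Aalg (V n) J e' \<and> card (B e') \<le> M) \<longrightarrow>
        e \<in> H \<longrightarrow>
        E' \<in> sigma_sets (Vprod (V n) J) (\<Union>e'\<in>{e'. e' \<subset> e}. B e') \<longrightarrow>
        \<bar>avg (Vprod (V n) J) (\<lambda>x. indicator E' x * f (proj e x))\<bar>
          \<le> C * box_norm (V n) e f)"
proof (intro exI[of _ "2^(M*2^d)"] allI impI)
  fix V :: "nat \<Rightarrow> 'j \<Rightarrow> 'v set" and \<nu> n and B :: "'j set \<Rightarrow> ('j \<Rightarrow> 'v) set set" and e E'
    and f :: "('j \<Rightarrow> 'v) \<Rightarrow> real"
  assume hs: "hypergraph_system J V d H" and pr: "pseudorandom J V H \<nu>"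
    and Bh: "\<forall>e'. e' \<subseteq> J \<and> card e' < d \<longrightarrow>
            sigma_algebra (Vprod (V n) J) (B e') \<and> B e' \<subseteq> Aalg (V n) J e' \<and> card (B e') \<le> M"
    and eH: "e \<in> H"
    and E: "E' \<in> sigma_sets (Vprod (V n) J) (\<Union>e'\<in>{e'. e' \<subset> e}. B e')"
  have eJ: "e \<subseteq> J" "card e = d" using assms(3) eH by auto
  have finW: "\<forall>j\<in>J. finite (V n j) \<and> V n j \<noteq> {}" using hs unfolding hypergraph_system_def by blast
  show "\<bar>avg (Vprod (V n) J) (\<lambda>x. indicator E' x * f (proj e x))\<bar> \<le> 2^(M*2^d) * box_norm (V n) e f"
    by (rule main_inner[OF assms(1) finW eJ assms(2) Bh E])
qed

end
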